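(* Let $\epsilon>0$ and $\phi\in H^{\infty}(\mathbb R)$. Let $u$ solve the Airy equation $\partial_tu+\partial_xu+\frac{\epsilon}{6}\partial_x^3u=0$ with $u(\cdot,0)=\phi$, and let $v$ solve the linear Whitham equation $\partial_tv+l(\sqrt{\epsilon}D)\partial_xv=0$ with $v(\cdot,0)=\phi$. Then for every integer $j\ge0$ there exists $N_j>0$, depending only on $j$ and $\|\phi\|_{H^{j+7}}$, such that $$\|\partial_x^j(u-v)(t)\|_{L^\infty_x}\le N_j\,\epsilon^2(1+t)\qquad\text{for all } t\ge 0.$$
   Context: $D=-i\partial_x$, and $l(\sqrt{\epsilon}D)$ denotes the Fourier multiplier with symbol $l(\sqrt{\epsilon}\xi)=\left(\frac{\tanh(\sqrt{\epsilon}|\xi|)}{\sqrt{\epsilon}|\xi|}\right)^{1/2}$. $H^{\infty}(\mathbb R)=\bigcap_{s\ge0}H^s(\mathbb R)$. *)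

theory Defs
  imports "HOL-Analysis.Analysis"
begin

text \<open>Functions on the real line are real valued. Fourier convention:
  hat phi (xi) = integral of phi(x) exp(-i x xi) dx, inverse with factor 1/(2 pi).\<close>

definition L2 :: "(real \<Rightarrow> real) \<Rightarrow> bool" where
  "L2 \<phi> \<longleftrightarrow> \<phi> \<in> borel_measurable lborel \<and>
      (\<integral>\<^sup>+ x. ennreal ((\<phi> x)\<^sup>2) \<partial>lborel) < \<infinity>"

definition trunc_ft :: "(real \<Rightarrow> real) \<Rightarrow> real \<Rightarrow> real \<Rightarrow> complex" where
  "trunc_ft \<phi> R \<xi> =
     set_lebesgue_integral lborel {-R..R} (\<lambda>x. complex_of_real (\<phi> x) * cis (- x * \<xi>))"

definition is_L2_fourier :: "(real \<Rightarrow> real) \<Rightarrow> (real \<Rightarrow> complex) \<Rightarrow> bool" where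
  "is_L2_fourier \<phi> \<Phi> \<longleftrightarrow> \<Phi> \<in> borel_measurable lborel \<and>
     ((\<lambda>R. \<integral>\<^sup>+ \<xi>. ennreal ((cmod (\<Phi> \<xi> - trunc_ft \<phi> R \<xi>))\<^sup>2) \<partial>lborel)
        \<longlongrightarrow> 0) at_top"

definition fourier :: "(real \<Rightarrow> real) \<Rightarrow> real \<Rightarrow> complex" where
  "fourier \<phi> = (SOME \<Phi>. is_L2_fourier \<phi> \<Phi>)"

definition sobolev_energy :: "real \<Rightarrow> (real \<Rightarrow> real) \<Rightarrow> ennreal" where
  "sobolev_energy s \<phi> =
     (\<integral>\<^sup>+ \<xi>. ennreal ((1 + \<xi>\<^sup>2) powr s * (cmod (fourier \<phi> \<xi>))\<^sup>2) \<partial>lborel)"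

definition in_sobolev :: "real \<Rightarrow> (real \<Rightarrow> real) \<Rightarrow> bool" where
  "in_sobolev s \<phi> \<longleftrightarrow> L2 \<phi> \<and> sobolev_energy s \<phi> < \<infinity>"

definition sobolev_norm :: "real \<Rightarrow> (real \<Rightarrow> real) \<Rightarrow> real" where
  "sobolev_norm s \<phi> = sqrt (enn2real (sobolev_energy s \<phi>))"

definition H_infty :: "(real \<Rightarrow> real) set" where
  "H_infty = {\<phi>. \<forall>s\<ge>0. in_sobolev s \<phi>}"

definition lsym :: "real \<Rightarrow> real" where
  "lsym s = (if s = 0 then 1 else sqrt (tanh \<bar>s\<bar> / \<bar>s\<bar>))"

text \<open>Solution of the Airy equation u_t + u_x + (eps/6) u_xxx = 0, u(.,0) = phi:
  hat u(xi,t) = exp(-i t (xi - eps xi^3/6)) hat phi(xi).  Arguments: x, then t.\<close>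
definition airy_sol :: "real \<Rightarrow> (real \<Rightarrow> real) \<Rightarrow> real \<Rightarrow> real \<Rightarrow> real" where
  "airy_sol \<epsilon> \<phi> x t = Re (complex_of_real (1 / (2 * pi)) *
     (\<integral>\<xi>. cis (x * \<xi> - t * (\<xi> - \<epsilon> / 6 * \<xi> ^ 3)) * fourier \<phi> \<xi> \<partial>lborel))"

text \<open>Solution of the linear Whitham equation v_t + l(sqrt eps D) v_x = 0, v(.,0) = phi:
  hat v(xi,t) = exp(-i t xi l(sqrt eps xi)) hat phi(xi).\<close>
definition whitham_sol :: "real \<Rightarrow> (real \<Rightarrow> real) \<Rightarrow> real \<Rightarrow> real \<Rightarrow> real" where
  "whitham_sol \<epsilon> \<phi> x t = Re (complex_of_real (1 / (2 * pi)) *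
     (\<integral>\<xi>. cis (x * \<xi> - t * \<xi> * lsym (sqrt \<epsilon> * \<xi>)) * fourier \<phi> \<xi> \<partial>lborel))"

end

theory Submission
  imports Defs "HOL-Probability.Characteristic_Functions" "HOL-Probability.Sinc_Integral"
begin


lemma cosh_ne0: "cosh (x::real) \<noteq> 0"
  using cosh_real_pos[of x] by simp

lemma tanh_deriv: "((tanh::real\<Rightarrow>real) has_real_derivative 1 - tanh x ^ 2) (at x)"
  unfolding tanh_def by (auto intro!: derivative_eq_intros simp: power2_eq_square field_split_simps cosh_ne0)

lemma tanh_le_self: assumes "0 \<le> a" shows "tanh a \<le> (a::real)"
proof -
  have "(\<lambda>x. x - tanh x) 0 \<le> (\<lambda>x. x - tanh x) a"
    using assms
    by (rule DERIV_nonneg_imp_nondecreasing[of 0 a]) (auto intro!: exI derivative_eq_intros tanh_deriv)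
  then show ?thesis by simp
qed

lemma tanh_lower: assumes "0 \<le> a" shows "a - a^3/3 \<le> tanh (a::real)"
proof -
  have "(\<lambda>x. tanh x - x + x^3/3) 0 \<le> (\<lambda>x. tanh x - x + x^3/3) a"
  proof (rule DERIV_nonneg_imp_nondecreasing[of 0 a])
    fix x assume x: "0 \<le> x" "x \<le> a"
    have "tanh x ^ 2 \<le> x ^ 2" using tanh_le_self[of x] x
      by (intro power_mono) auto
    moreover have "((\<lambda>x. tanh x - x + x^3/3) has_real_derivative
       ((1 - tanh x ^ 2) - 1 + x^2)) (at x)"
      by (auto intro!: derivative_eq_intros simp: cosh_ne0 eval_nat_numeral)
    ultimately show "\<exists>y. ((\<lambda>x. tanh x - x + x^3/3) has_real_derivative y) (at x) \<and> 0 \<le> y"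
      by (intro exI conjI) auto
  qed (use assms in auto)
  then show ?thesis by simp
qed

lemma tanh_upper: assumes "0 \<le> a" "a \<le> 1" shows "tanh (a::real) \<le> a - a^3/3 + 2*a^5/15"
proof -
  have "(\<lambda>x. x - x^3/3 + 2*x^5/15 - tanh x) 0 \<le> (\<lambda>x. x - x^3/3 + 2*x^5/15 - tanh x) a"
  proof (rule DERIV_nonneg_imp_nondecreasing[of 0 a])
    fix x assume x: "0 \<le> x" "x \<le> a"
    have nn: "0 \<le> x - x^3/3" using x assms
    proof -
      have x1: "x \<le> 1" using x assms by linarith
      have "x*x \<le> 1" using x x1 by (intro mult_le_one) auto
      then have "x*(x*x) \<le> x*1" using x by (intro mult_left_mono) auto
      then have "x^3 \<le> x" by (simp add: power3_eq_cube)
      then show ?thesis using x by linarith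
    qed
    have "(x - x^3/3) ^ 2 \<le> tanh x ^ 2" using tanh_lower[of x] x nn
      by (intro power_mono) auto
    moreover have "(x - x^3/3) ^ 2 = x^2 - 2*x^4/3 + x^6/9"
    proof -
      have "(x - x^3/3)^2 = x^2 - 2*(x*x^3)/3 + (x^3)^2/9" by (simp add: power2_diff power_divide)
      also have "x*x^3 = x^4" by (simp add: eval_nat_numeral)
      also have "(x^3)^2 = x^6" by (simp flip: power_mult)
      finally show ?thesis .
    qed
    moreover have "0 \<le> x^6" by simp
    ultimately have h: "x^2 - 2*x^4/3 \<le> tanh x ^ 2" by linarith
    have "((\<lambda>x. x - x^3/3 + 2*x^5/15 - tanh x) has_real_derivative
       (1 - x^2 + 2*x^4/3 - (1 - tanh x ^ 2))) (at x)"
      by (auto intro!: derivative_eq_intros simp: cosh_ne0 eval_nat_numeral)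
    then show "\<exists>y. ((\<lambda>x. x - x^3/3 + 2*x^5/15 - tanh x) has_real_derivative y) (at x) \<and> 0 \<le> y"
      using h by (intro exI conjI) auto
  qed (use assms in auto)
  then show ?thesis by simp
qed

lemma lsym_abs: "lsym \<bar>s\<bar> = lsym s"
  by (simp add: lsym_def)

lemma lsym_bound_nonneg: assumes "0 \<le> a" shows "\<bar>1 - a^2/6 - lsym a\<bar> \<le> 3 * a^4"
proof (cases "a = 0")
  case True then show ?thesis by (simp add: lsym_def)
next
  case False
  then have a: "0 < a" using assms by simp
  define q where "q = tanh a / a"
  have l: "lsym a = sqrt q" using a by (simp add: lsym_def q_def)
  have q1: "q \<le> 1" using tanh_le_self[of a] a by (simp add: q_def)
  have q0: "0 \<le> q" using a by (simp add: q_def)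
  show ?thesis
  proof (cases "a \<ge> 1")
    case True
    have "sqrt q \<le> 1" using q1 by simp
    moreover have "0 \<le> sqrt q" using q0 by simp
    moreover have "a^2 \<le> a^4" using True by (intro power_increasing) auto
    moreover have "1 \<le> a^4" using True by simp
    moreover have "0 \<le> a^2" by simp
    ultimately show ?thesis unfolding l by linarith
  next
    case False
    then have a1: "a < 1" by simp
    have "a - a^3/3 \<le> tanh a" by (rule tanh_lower) (use a in auto)
    then have ql: "1 - a^2/3 \<le> q" using a by (simp add: q_def field_simps power2_eq_square power3_eq_cube)
    have "tanh a \<le> a - a^3/3 + 2*a^5/15" by (rule tanh_upper) (use a a1 in auto)
    then have qu: "q \<le> 1 - a^2/3 + 2*a^4/15" using a
      by (simp add: q_def field_simps power2_eq_square power3_eq_cube eval_nat_numeral)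
    define b where "b = 1 - a^2/6"
    have a2: "a^2 \<le> 1" using a a1 by (simp add: power_le_one)
    have b0: "5/6 \<le> b" using a2 by (simp add: b_def)
    have bb: "b^2 = 1 - a^2/3 + a^4/36" unfolding b_def by (simp add: power2_eq_square eval_nat_numeral field_simps)
    have a4: "0 \<le> a^4" by simp
    have d: "\<bar>q - b^2\<bar> \<le> 2*a^4/15" using ql qu bb a4 by linarith
    have pos: "5/6 \<le> sqrt q + b" using q0 b0 by (smt (verit) real_sqrt_ge_zero)
    have "(sqrt q - b)*(sqrt q + b) = (sqrt q)^2 - b^2" by (simp add: algebra_simps power2_eq_square)
    also have "\<dots> = q - b^2" using q0 by simp
    finally have sq: "sqrt q - b = (q - b^2) / (sqrt q + b)"
      using pos by (simp add: eq_divide_eq)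
    have "\<bar>sqrt q - b\<bar> = \<bar>q - b^2\<bar> / (sqrt q + b)" using sq pos by simp
    also have "\<dots> \<le> (2*a^4/15) / (5/6)"
      by (rule frac_le) (use d pos in auto)
    also have "\<dots> \<le> 3 * a^4" using a4 by simp
    finally show ?thesis unfolding l b_def by linarith
  qed
qed

lemma phase_bound:
  assumes "0 < \<epsilon>" "0 \<le> t"
  shows "\<bar>t * (\<xi> - \<epsilon> / 6 * \<xi> ^ 3) - t * \<xi> * lsym (sqrt \<epsilon> * \<xi>)\<bar> \<le> 3 * t * \<epsilon>^2 * \<bar>\<xi>\<bar>^5"
proof -
  define a where "a = \<bar>sqrt \<epsilon> * \<xi>\<bar>"
  have la: "lsym (sqrt \<epsilon> * \<xi>) = lsym a" unfolding a_def by (simp add: lsym_abs)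
  have a2: "a^2 = \<epsilon> * \<xi>^2" using assms by (simp add: a_def power_mult_distrib)
  have a4: "a^4 = \<epsilon>^2 * \<xi>^4"
  proof -
    have "a^4 = (a^2)^2" by simp
    also have "\<dots> = \<epsilon>^2 * \<xi>^4" unfolding a2 by (simp add: power_mult_distrib)
    finally show ?thesis .
  qed
  have B: "\<bar>1 - a^2/6 - lsym a\<bar> \<le> 3 * a^4" by (rule lsym_bound_nonneg) (simp add: a_def)
  have "t * (\<xi> - \<epsilon> / 6 * \<xi> ^ 3) - t * \<xi> * lsym (sqrt \<epsilon> * \<xi>) = t * \<xi> * (1 - a^2/6 - lsym a)"
    unfolding la a2 by (simp add: algebra_simps power3_eq_cube power2_eq_square)
  then have "\<bar>t * (\<xi> - \<epsilon> / 6 * \<xi> ^ 3) - t * \<xi> * lsym (sqrt \<epsilon> * \<xi>)\<bar> = t * \<bar>\<xi>\<bar> * \<bar>1 - a^2/6 - lsym a\<bar>"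
    using assms by (simp add: abs_mult)
  also have "\<dots> \<le> t * \<bar>\<xi>\<bar> * (3 * a^4)" using B assms by (intro mult_left_mono) auto
  also have "\<dots> = 3 * t * \<epsilon>^2 * \<bar>\<xi>\<bar>^5" unfolding a4
  proof -
    have "\<xi>^4 = \<bar>\<xi>\<bar>^4" by (simp add: power_even_abs)
    then have "\<bar>\<xi>\<bar> * \<xi>^4 = \<bar>\<xi>\<bar>^5" by (simp add: eval_nat_numeral)
    then show "t * \<bar>\<xi>\<bar> * (3 * (\<epsilon>^2 * \<xi>^4)) = 3 * t * \<epsilon>^2 * \<bar>\<xi>\<bar>^5"
      by (metis mult.assoc mult.left_commute)
  qed
  finally show ?thesis .
qed



definition PhiW :: "(real \<Rightarrow> complex) \<Rightarrow> real \<Rightarrow> complex" where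
  "PhiW W y = (\<integral>\<xi>. cis (y * \<xi>) * W \<xi> \<partial>lborel)"

definition moments :: "(real \<Rightarrow> complex) \<Rightarrow> bool" where
  "moments W \<longleftrightarrow> W \<in> borel_measurable lborel \<and>
     (\<forall>k::nat. integrable lborel (\<lambda>\<xi>. \<bar>\<xi>\<bar>^k * cmod (W \<xi>)))"

lemma cis_iexp: "cis x = iexp x"
  by (simp add: cis_conv_exp)

lemma cis_taylor1: "cmod (cis x - 1 - \<i> * complex_of_real x) \<le> x^2 / 2"
proof -
  have "cmod (iexp x - (\<Sum>k \<le> 1. (\<i> * x)^k / fact k)) \<le> \<bar>x\<bar>^(Suc 1) / fact (Suc 1)"
    by (rule iexp_approx1)
  then show ?thesis by (simp add: cis_iexp power2_eq_square diff_diff_eq)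
qed

lemma cis_lip0: "cmod (cis x - 1) \<le> \<bar>x\<bar>"
proof -
  have "cmod (iexp x - (\<Sum>k \<le> 0. (\<i> * x)^k / fact k)) \<le> \<bar>x\<bar>^(Suc 0) / fact (Suc 0)"
    by (rule iexp_approx1)
  then show ?thesis by (simp add: cis_iexp)
qed

lemma cis_lip: "cmod (cis a - cis b) \<le> \<bar>a - b\<bar>"
proof -
  have "cis a - cis b = cis b * (cis (a - b) - 1)"
    by (simp add: algebra_simps cis_mult)
  then have "cmod (cis a - cis b) = cmod (cis (a - b) - 1)" by (simp add: norm_mult)
  also have "\<dots> \<le> \<bar>a - b\<bar>" by (rule cis_lip0)
  finally show ?thesis .
qed

lemma cis_meas[measurable]: "cis \<in> borel_measurable borel"
  unfolding cis_conv_exp by measurable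

lemma moments_meas: "moments W \<Longrightarrow> W \<in> borel_measurable lborel"
  by (simp add: moments_def)

lemma moments_int: "moments W \<Longrightarrow> integrable lborel (\<lambda>\<xi>. \<bar>\<xi>\<bar>^k * cmod (W \<xi>))"
  by (simp add: moments_def)

lemma moments_integrand: assumes "moments W"
  shows "integrable lborel (\<lambda>\<xi>. cis (y * \<xi>) * W \<xi>)"
proof -
  have [measurable]: "W \<in> borel_measurable lborel" using moments_meas[OF assms] .
  have m: "(\<lambda>\<xi>. cis (y * \<xi>) * W \<xi>) \<in> borel_measurable lborel"
    by measurable
  have "AE x in lborel. norm (cis (y * x) * W x) \<le> norm (\<bar>x\<bar>^0 * cmod (W x))"
    by (simp add: norm_mult)
  from Bochner_Integration.integrable_bound[OF moments_int[OF assms, of 0] m this] show ?thesis .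
qed

lemma moments_mult_i: assumes "moments W" shows "moments (\<lambda>\<xi>. \<i> * complex_of_real \<xi> * W \<xi>)"
  unfolding moments_def
proof (intro conjI allI)
  have [measurable]: "W \<in> borel_measurable lborel" using moments_meas[OF assms] .
  show "(\<lambda>\<xi>. \<i> * complex_of_real \<xi> * W \<xi>) \<in> borel_measurable lborel"
    by measurable
  fix k
  have "integrable lborel (\<lambda>\<xi>. \<bar>\<xi>\<bar>^(Suc k) * cmod (W \<xi>))" by (rule moments_int[OF assms])
  moreover have "(\<lambda>\<xi>. \<bar>\<xi>\<bar>^(Suc k) * cmod (W \<xi>)) = (\<lambda>\<xi>. \<bar>\<xi>\<bar>^k * cmod (\<i> * complex_of_real \<xi> * W \<xi>))"
    by (rule ext) (simp add: norm_mult)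
  ultimately show "integrable lborel (\<lambda>\<xi>. \<bar>\<xi>\<bar>^k * cmod (\<i> * complex_of_real \<xi> * W \<xi>))" by simp
qed

lemma moments_pow: assumes "moments W" shows "moments (\<lambda>\<xi>. (\<i> * complex_of_real \<xi>)^m * W \<xi>)"
proof (induction m)
  case 0 then show ?case using assms by simp
next
  case (Suc m)
  from moments_mult_i[OF Suc] show ?case by (simp add: mult.assoc)
qed

lemma Phi_taylor: assumes "moments W"
  shows "cmod (PhiW W (y + h) - PhiW W y - complex_of_real h * PhiW (\<lambda>\<xi>. \<i> * complex_of_real \<xi> * W \<xi>) y)
     \<le> h^2 / 2 * (\<integral>\<xi>. \<bar>\<xi>\<bar>^2 * cmod (W \<xi>) \<partial>lborel)"
proof -
  have i1: "integrable lborel (\<lambda>\<xi>. cis ((y+h) * \<xi>) * W \<xi>)" by (rule moments_integrand[OF assms])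
  have i2: "integrable lborel (\<lambda>\<xi>. cis (y * \<xi>) * W \<xi>)" by (rule moments_integrand[OF assms])
  have i3: "integrable lborel (\<lambda>\<xi>. cis (y * \<xi>) * (\<i> * complex_of_real \<xi> * W \<xi>))"
    by (rule moments_integrand[OF moments_mult_i[OF assms]])
  have "PhiW W (y + h) - PhiW W y - complex_of_real h * PhiW (\<lambda>\<xi>. \<i> * complex_of_real \<xi> * W \<xi>) y
     = (\<integral>\<xi>. cis ((y+h) * \<xi>) * W \<xi> - cis (y * \<xi>) * W \<xi>
            - complex_of_real h * (cis (y * \<xi>) * (\<i> * complex_of_real \<xi> * W \<xi>)) \<partial>lborel)"
    unfolding PhiW_def using i1 i2 i3 by (simp add: integral_diff integral_mult_right_zero)
  also have "\<dots> = (\<integral>\<xi>. cis (y * \<xi>) * (cis (h * \<xi>) - 1 - \<i> * complex_of_real (h * \<xi>)) * W \<xi> \<partial>lborel)"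
    by (intro Bochner_Integration.integral_cong refl) (simp add: algebra_simps cis_mult)
  finally have eq: "PhiW W (y + h) - PhiW W y - complex_of_real h * PhiW (\<lambda>\<xi>. \<i> * complex_of_real \<xi> * W \<xi>) y
     = (\<integral>\<xi>. cis (y * \<xi>) * (cis (h * \<xi>) - 1 - \<i> * complex_of_real (h * \<xi>)) * W \<xi> \<partial>lborel)" .
  have "cmod (\<integral>\<xi>. cis (y * \<xi>) * (cis (h * \<xi>) - 1 - \<i> * complex_of_real (h * \<xi>)) * W \<xi> \<partial>lborel)
     \<le> (\<integral>\<xi>. cmod (cis (y * \<xi>) * (cis (h * \<xi>) - 1 - \<i> * complex_of_real (h * \<xi>)) * W \<xi>) \<partial>lborel)"
    by (rule integral_norm_bound)
  also have "\<dots> \<le> (\<integral>\<xi>. h^2 / 2 * (\<bar>\<xi>\<bar>^2 * cmod (W \<xi>)) \<partial>lborel)"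
  proof (rule integral_mono')
    show "integrable lborel (\<lambda>\<xi>. h^2 / 2 * (\<bar>\<xi>\<bar>^2 * cmod (W \<xi>)))"
      using moments_int[OF assms, of 2] by simp
    fix \<xi>
    have "cmod (cis (h * \<xi>) - 1 - \<i> * complex_of_real (h * \<xi>)) \<le> (h * \<xi>)^2 / 2" by (rule cis_taylor1)
    then have "cmod (cis (h * \<xi>) - 1 - \<i> * complex_of_real (h * \<xi>)) * cmod (W \<xi>) \<le> (h * \<xi>)^2 / 2 * cmod (W \<xi>)"
      by (intro mult_right_mono) auto
    then show "cmod (cis (y * \<xi>) * (cis (h * \<xi>) - 1 - \<i> * complex_of_real (h * \<xi>)) * W \<xi>) \<le> h^2 / 2 * (\<bar>\<xi>\<bar>^2 * cmod (W \<xi>))"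
      by (simp add: norm_mult power_mult_distrib)
    show "0 \<le> h^2 / 2 * (\<bar>\<xi>\<bar>^2 * cmod (W \<xi>))" by simp
  qed
  also have "\<dots> = h^2 / 2 * (\<integral>\<xi>. \<bar>\<xi>\<bar>^2 * cmod (W \<xi>) \<partial>lborel)" by simp
  finally show ?thesis unfolding eq .
qed



lemma deriv_Phi: assumes "moments W"
  shows "((\<lambda>y. Re (c * PhiW W y)) has_real_derivative
          Re (c * PhiW (\<lambda>\<xi>. \<i> * complex_of_real \<xi> * W \<xi>) y)) (at y)"
proof -
  define M where "M = (\<integral>\<xi>. \<bar>\<xi>\<bar>^2 * cmod (W \<xi>) \<partial>lborel)"
  define D where "D = Re (c * PhiW (\<lambda>\<xi>. \<i> * complex_of_real \<xi> * W \<xi>) y)"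
  have bound: "norm ((Re (c * PhiW W (y + h)) - Re (c * PhiW W y)) / h - D) \<le> norm h * (cmod c * M / 2)"
    if h: "h \<noteq> 0" for h
  proof -
    define Z where "Z = PhiW W (y + h) - PhiW W y - complex_of_real h * PhiW (\<lambda>\<xi>. \<i> * complex_of_real \<xi> * W \<xi>) y"
    have Zb: "cmod Z \<le> h^2 / 2 * M" unfolding Z_def M_def by (rule Phi_taylor[OF assms])
    have "c * Z = c * PhiW W (y + h) - c * PhiW W y - complex_of_real h * (c * PhiW (\<lambda>\<xi>. \<i> * complex_of_real \<xi> * W \<xi>) y)"
      unfolding Z_def by (simp add: algebra_simps)
    then have "Re (c * Z) = Re (c * PhiW W (y + h)) - Re (c * PhiW W y) - h * D"
      unfolding D_def by simp
    then have eq: "(Re (c * PhiW W (y + h)) - Re (c * PhiW W y)) / h - D = Re (c * Z) / h"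
      using h by (simp add: field_simps)
    have "\<bar>Re (c * Z)\<bar> \<le> cmod (c * Z)" by (rule abs_Re_le_cmod)
    also have "\<dots> = cmod c * cmod Z" by (simp add: norm_mult)
    also have "\<dots> \<le> cmod c * (h^2 / 2 * M)" by (intro mult_left_mono Zb) auto
    finally have r: "\<bar>Re (c * Z)\<bar> \<le> cmod c * (h^2 / 2 * M)" .
    have "norm (Re (c * Z) / h) = \<bar>Re (c * Z)\<bar> / \<bar>h\<bar>" by simp
    also have "\<dots> \<le> cmod c * (h^2 / 2 * M) / \<bar>h\<bar>"
      using h r by (intro divide_right_mono) auto
    also have "\<dots> = norm h * (cmod c * M / 2)"
      using h by (simp add: power2_eq_square field_simps abs_mult_self_eq)
    finally show ?thesis unfolding eq .
  qed
  show ?thesis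
    unfolding DERIV_def D_def[symmetric]
  proof (rule LIM_zero_cancel, rule tendsto_0_le[where f = "\<lambda>h. h" and K = "cmod c * M / 2"])
    show "((\<lambda>h::real. h) \<longlongrightarrow> 0) (at 0)" by (rule tendsto_ident_at)
    show "\<forall>\<^sub>F h in at 0. norm ((Re (c * PhiW W (y + h)) - Re (c * PhiW W y)) / h - D) \<le> norm h * (cmod c * M / 2)"
      unfolding eventually_at_filter by (rule always_eventually) (blast intro: bound)
  qed
qed

lemma deriv_iter: assumes "moments W"
  shows "(deriv ^^ k) (\<lambda>y. Re (c * PhiW W y)) = (\<lambda>y. Re (c * PhiW (\<lambda>\<xi>. (\<i> * complex_of_real \<xi>)^k * W \<xi>) y))"
proof (induction k)
  case 0 then show ?case by simp
next
  case (Suc k)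
  have "(deriv ^^ Suc k) (\<lambda>y. Re (c * PhiW W y)) = deriv ((deriv ^^ k) (\<lambda>y. Re (c * PhiW W y)))" by simp
  also have "\<dots> = deriv (\<lambda>y. Re (c * PhiW (\<lambda>\<xi>. (\<i> * complex_of_real \<xi>)^k * W \<xi>) y))" by (simp only: Suc)
  also have "\<dots> = (\<lambda>y. Re (c * PhiW (\<lambda>\<xi>. \<i> * complex_of_real \<xi> * ((\<i> * complex_of_real \<xi>)^k * W \<xi>)) y))"
    by (rule ext, rule DERIV_imp_deriv, rule deriv_Phi, rule moments_pow[OF assms])
  also have "(\<lambda>\<xi>. \<i> * complex_of_real \<xi> * ((\<i> * complex_of_real \<xi>)^k * W \<xi>)) = (\<lambda>\<xi>. (\<i> * complex_of_real \<xi>)^Suc k * W \<xi>)"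
    by (simp add: mult.assoc)
  finally show ?case .
qed

lemma tanh_meas[measurable]: "(tanh::real\<Rightarrow>real) \<in> borel_measurable borel"
proof (rule borel_measurable_continuous_onI)
  have "continuous_on UNIV (\<lambda>x::real. tanh x)"
    by (rule continuous_on_tanh) (auto intro: continuous_intros cosh_ne0)
  then show "continuous_on UNIV (tanh::real\<Rightarrow>real)" by simp
qed

lemma lsym_meas[measurable]: "lsym \<in> borel_measurable borel"
  unfolding lsym_def by measurable

lemma inv_sq_integrable: "integrable lborel (\<lambda>x::real. inverse (1 + x^2))"
  using integrable_inverse_1_plus_square
  by (simp add: einterval_eq_UNIV set_integrable_def)

lemma inv_sq_integral: "(\<integral>x. inverse (1 + x^2) \<partial>lborel) = pi"
  using LBINT_inverse_1_plus_square
  by (simp add: einterval_eq_UNIV interval_lebesgue_integral_def set_lebesgue_integral_def)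

lemma pointwise_amgm:
  fixes \<xi> A :: real and k :: nat
  assumes "0 \<le> A"
  shows "\<bar>\<xi>\<bar>^k * A \<le> ((1 + \<xi>^2) powr real (k+2) * A^2 + inverse (1 + \<xi>^2)) / 2"
proof -
  define u where "u = 1 + \<xi>^2"
  have u1: "1 \<le> u" by (simp add: u_def)
  have u0: "0 < u" using u1 by simp
  define B where "B = \<bar>\<xi>\<bar>^k * A"
  have B0: "0 \<le> B" using assms by (simp add: B_def)
  have "B = (B * u) * inverse u" using u0 by simp
  also have "\<dots> \<le> ((B * u)^2 + (inverse u)^2) / 2"
  proof -
    have "0 \<le> (B * u - inverse u)^2" by simp
    then show ?thesis by (simp add: power2_diff)
  qed
  also have "(B * u)^2 \<le> u powr real (k+2) * A^2"
  proof -
    have "(\<bar>\<xi>\<bar>^k)^2 = (\<bar>\<xi>\<bar>^2)^k" by (metis power_mult mult.commute)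
    also have "\<bar>\<xi>\<bar>^2 = \<xi>^2" by simp
    also have "(\<xi>^2)^k \<le> u^k" unfolding u_def by (intro power_mono) auto
    finally have "(\<bar>\<xi>\<bar>^k)^2 \<le> u^k" .
    then have "(B * u)^2 \<le> u^k * A^2 * u^2"
      unfolding B_def by (simp add: power_mult_distrib mult_right_mono)
    also have "\<dots> = u powr real (k+2) * A^2"
    proof -
      have "u powr real (k+2) = u^(k+2)" using u0 by (rule powr_realpow)
      also have "\<dots> = u^k * u^2" by (rule power_add)
      finally show ?thesis by simp
    qed
    finally show ?thesis .
  qed
  also have "(inverse u)^2 \<le> inverse u"
  proof -
    have "inverse u \<le> 1" using u1 by (simp add: inverse_le_1_iff)
    moreover have "0 \<le> inverse u" using u0 by simp
    ultimately show ?thesis using mult_right_mono[of "inverse u" 1 "inverse u"] by (simp add: power2_eq_square)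
  qed
  finally show ?thesis unfolding B_def u_def by simp
qed



lemma sob_moment:
  assumes F[measurable]: "F \<in> borel_measurable lborel"
  and S: "(\<integral>\<^sup>+\<xi>. ennreal ((1 + \<xi>\<^sup>2) powr real (k+2) * (cmod (F \<xi>))\<^sup>2) \<partial>lborel) < \<infinity>"
  shows "integrable lborel (\<lambda>\<xi>. \<bar>\<xi>\<bar>^k * cmod (F \<xi>))"
    and "(\<integral>\<xi>. \<bar>\<xi>\<bar>^k * cmod (F \<xi>) \<partial>lborel)
          \<le> (enn2real (\<integral>\<^sup>+\<xi>. ennreal ((1 + \<xi>\<^sup>2) powr real (k+2) * (cmod (F \<xi>))\<^sup>2) \<partial>lborel) + pi) / 2"
proof -
  define h1 where "h1 = (\<lambda>\<xi>. (1 + \<xi>\<^sup>2) powr real (k+2) * (cmod (F \<xi>))\<^sup>2)"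
  have m1[measurable]: "h1 \<in> borel_measurable lborel" unfolding h1_def by measurable
  have i1: "integrable lborel h1"
    by (rule integrableI_nonneg) (use S in \<open>auto simp: h1_def\<close>)
  have v1: "(\<integral>\<xi>. h1 \<xi> \<partial>lborel) = enn2real (\<integral>\<^sup>+\<xi>. ennreal ((1 + \<xi>\<^sup>2) powr real (k+2) * (cmod (F \<xi>))\<^sup>2) \<partial>lborel)"
    unfolding h1_def by (rule integral_eq_nn_integral) auto
  define G where "G = (\<lambda>\<xi>::real. (h1 \<xi> + inverse (1 + \<xi>^2)) / 2)"
  have iG: "integrable lborel G" unfolding G_def
    by (rule integrable_divide_zero[OF Bochner_Integration.integrable_add[OF i1 inv_sq_integrable]])
  have vG: "(\<integral>\<xi>. G \<xi> \<partial>lborel) = ((\<integral>\<xi>. h1 \<xi> \<partial>lborel) + pi) / 2"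
    unfolding G_def integral_divide_zero Bochner_Integration.integral_add[OF i1 inv_sq_integrable] inv_sq_integral ..
  have pw: "\<bar>\<xi>\<bar>^k * cmod (F \<xi>) \<le> G \<xi>" for \<xi>
    unfolding G_def h1_def by (rule pointwise_amgm) simp
  have G0: "0 \<le> G \<xi>" for \<xi>
  proof -
    have "0 \<le> \<bar>\<xi>\<bar>^k * cmod (F \<xi>)" by simp
    then show ?thesis using pw[of \<xi>] by linarith
  qed
  show I: "integrable lborel (\<lambda>\<xi>. \<bar>\<xi>\<bar>^k * cmod (F \<xi>))"
  proof (rule Bochner_Integration.integrable_bound[OF iG])
    show "(\<lambda>\<xi>. \<bar>\<xi>\<bar>^k * cmod (F \<xi>)) \<in> borel_measurable lborel" by measurable
    show "AE x in lborel. norm (\<bar>x\<bar>^k * cmod (F x)) \<le> norm (G x)"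
      using pw G0 by (simp add: abs_mult)
  qed
  have "(\<integral>\<xi>. \<bar>\<xi>\<bar>^k * cmod (F \<xi>) \<partial>lborel) \<le> (\<integral>\<xi>. G \<xi> \<partial>lborel)"
    by (rule integral_mono[OF I iG pw])
  then show "(\<integral>\<xi>. \<bar>\<xi>\<bar>^k * cmod (F \<xi>) \<partial>lborel)
          \<le> (enn2real (\<integral>\<^sup>+\<xi>. ennreal ((1 + \<xi>\<^sup>2) powr real (k+2) * (cmod (F \<xi>))\<^sup>2) \<partial>lborel) + pi) / 2"
    unfolding vG v1 .
qed

lemma deriv_iter_zero: "(deriv ^^ k) (\<lambda>y::real. 0::real) = (\<lambda>y. 0)"
  by (induction k) simp_all



lemma cis_split: "cis (a - b) = cis a * cis (- b)"
  by (simp add: cis_mult)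

lemma nonmeas_zero:
  assumes nm: "fourier \<phi> \<notin> borel_measurable lborel"
  and pm: "p \<in> borel_measurable lborel"
  shows "(\<integral>\<xi>. cis (y * \<xi> - p \<xi>) * fourier \<phi> \<xi> \<partial>lborel) = 0"
proof (rule not_integrable_integral_eq, rule notI)
  assume "integrable lborel (\<lambda>\<xi>. cis (y * \<xi> - p \<xi>) * fourier \<phi> \<xi>)"
  then have [measurable]: "(\<lambda>\<xi>. cis (y * \<xi> - p \<xi>) * fourier \<phi> \<xi>) \<in> borel_measurable lborel"
    by (rule borel_measurable_integrable)
  have [measurable]: "p \<in> borel_measurable borel" using pm by simp
  have meas: "(\<lambda>\<xi>. cis (- (y * \<xi> - p \<xi>)) * (cis (y * \<xi> - p \<xi>) * fourier \<phi> \<xi>)) \<in> borel_measurable lborel"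
    by measurable
  have eq: "(\<lambda>\<xi>. cis (- (y * \<xi> - p \<xi>)) * (cis (y * \<xi> - p \<xi>) * fourier \<phi> \<xi>)) = fourier \<phi>"
    by (rule ext) (simp add: mult.assoc[symmetric] cis_mult)
  have "fourier \<phi> \<in> borel_measurable lborel" using meas by (simp only: eq)
  then show False using nm by blast
qed

theorem theorem2p2:
  fixes j :: nat
  shows "\<exists>N :: real \<Rightarrow> real. (\<forall>r. N r > 0) \<and>
    (\<forall>\<epsilon> \<phi> t x. \<epsilon> > 0 \<longrightarrow> \<phi> \<in> H_infty \<longrightarrow> t \<ge> 0 \<longrightarrow>
       \<bar>(deriv ^^ j) (\<lambda>y. airy_sol \<epsilon> \<phi> y t - whitham_sol \<epsilon> \<phi> y t) x\<bar>
         \<le> N (sobolev_norm (real j + 7) \<phi>) * \<epsilon>\<^sup>2 * (1 + t))"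
proof -
  define N where "N = (\<lambda>r::real. 3 * (r^2 + pi) / (4*pi) + 1)"
  have Npos: "0 < N r" for r
  proof -
    have "0 \<le> 3 * (r^2 + pi) / (4*pi)" by (simp add: pi_gt_zero less_imp_le)
    then show ?thesis unfolding N_def by linarith
  qed
  show ?thesis
  proof (intro exI[of _ N] conjI allI impI)
    show "0 < N r" for r by (rule Npos)
    fix \<epsilon> t x :: real and \<phi> :: "real \<Rightarrow> real"
    assume eps: "\<epsilon> > 0" and phi: "\<phi> \<in> H_infty" and t: "t \<ge> 0"
    define F where "F = fourier \<phi>"
    define c where "c = complex_of_real (1/(2*pi))"
    define p1 where "p1 = (\<lambda>\<xi>. t * (\<xi> - \<epsilon> / 6 * \<xi> ^ 3))"
    define p2 where "p2 = (\<lambda>\<xi>. t * \<xi> * lsym (sqrt \<epsilon> * \<xi>))"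
    have [measurable]: "p1 \<in> borel_measurable borel" unfolding p1_def by measurable
    have [measurable]: "p2 \<in> borel_measurable borel" unfolding p2_def by measurable
    have airy_eq: "airy_sol \<epsilon> \<phi> y t = Re (c * (\<integral>\<xi>. cis (y * \<xi> - p1 \<xi>) * F \<xi> \<partial>lborel))" for y
      unfolding airy_sol_def c_def p1_def F_def ..
    have wh_eq: "whitham_sol \<epsilon> \<phi> y t = Re (c * (\<integral>\<xi>. cis (y * \<xi> - p2 \<xi>) * F \<xi> \<partial>lborel))" for y
      unfolding whitham_sol_def c_def p2_def F_def ..
    have rhs0: "0 \<le> N (sobolev_norm (real j + 7) \<phi>) * \<epsilon>\<^sup>2 * (1 + t)"
      using Npos[of "sobolev_norm (real j + 7) \<phi>"] t by simp
    show "\<bar>(deriv ^^ j) (\<lambda>y. airy_sol \<epsilon> \<phi> y t - whitham_sol \<epsilon> \<phi> y t) x\<bar>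
         \<le> N (sobolev_norm (real j + 7) \<phi>) * \<epsilon>\<^sup>2 * (1 + t)"
    proof (cases "F \<in> borel_measurable lborel")
      case False
      have "(\<lambda>y. airy_sol \<epsilon> \<phi> y t - whitham_sol \<epsilon> \<phi> y t) = (\<lambda>y. 0)"
      proof (rule ext)
        fix y
        have "(\<integral>\<xi>. cis (y * \<xi> - p1 \<xi>) * F \<xi> \<partial>lborel) = 0"
          unfolding F_def by (rule nonmeas_zero) (use False in \<open>auto simp: F_def\<close>)
        moreover have "(\<integral>\<xi>. cis (y * \<xi> - p2 \<xi>) * F \<xi> \<partial>lborel) = 0"
          unfolding F_def by (rule nonmeas_zero) (use False in \<open>auto simp: F_def\<close>)
        ultimately show "airy_sol \<epsilon> \<phi> y t - whitham_sol \<epsilon> \<phi> y t = 0"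
          unfolding airy_eq wh_eq by simp
      qed
      then show ?thesis using rhs0 by (simp add: deriv_iter_zero)
    next
      case True
      note Fm[measurable] = True
      have sob: "(\<integral>\<^sup>+\<xi>. ennreal ((1 + \<xi>\<^sup>2) powr real (k+2) * (cmod (F \<xi>))\<^sup>2) \<partial>lborel) < \<infinity>" for k :: nat
      proof -
        have "in_sobolev (real (k+2)) \<phi>" using phi by (simp add: H_infty_def)
        then show ?thesis by (simp add: in_sobolev_def sobolev_energy_def F_def)
      qed
      have mF: "integrable lborel (\<lambda>\<xi>. \<bar>\<xi>\<bar>^k * cmod (F \<xi>))" for k
        by (rule sob_moment(1)[OF Fm sob])
      define W1 where "W1 = (\<lambda>\<xi>. cis (- p1 \<xi>) * F \<xi>)"
      define W2 where "W2 = (\<lambda>\<xi>. cis (- p2 \<xi>) * F \<xi>)"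
      have [measurable]: "W1 \<in> borel_measurable lborel" unfolding W1_def by measurable
      have [measurable]: "W2 \<in> borel_measurable lborel" unfolding W2_def by measurable
      have nW1: "cmod (W1 \<xi>) = cmod (F \<xi>)" for \<xi> by (simp add: W1_def norm_mult)
      have nW2: "cmod (W2 \<xi>) = cmod (F \<xi>)" for \<xi> by (simp add: W2_def norm_mult)
      have M1: "moments W1" unfolding moments_def using mF by (simp add: nW1)
      have M2: "moments W2" unfolding moments_def using mF by (simp add: nW2)
      have MD: "moments (\<lambda>\<xi>. W1 \<xi> - W2 \<xi>)"
        unfolding moments_def
      proof (intro conjI allI)
        show "(\<lambda>\<xi>. W1 \<xi> - W2 \<xi>) \<in> borel_measurable lborel" by measurable
        fix k
        show "integrable lborel (\<lambda>\<xi>. \<bar>\<xi>\<bar>^k * cmod (W1 \<xi> - W2 \<xi>))"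
        proof (rule Bochner_Integration.integrable_bound)
          show "integrable lborel (\<lambda>\<xi>. 2 * (\<bar>\<xi>\<bar>^k * cmod (F \<xi>)))" using mF[of k] by simp
          show "(\<lambda>\<xi>. \<bar>\<xi>\<bar>^k * cmod (W1 \<xi> - W2 \<xi>)) \<in> borel_measurable lborel" by measurable
          show "AE x in lborel. norm (\<bar>x\<bar>^k * cmod (W1 x - W2 x)) \<le> norm (2 * (\<bar>x\<bar>^k * cmod (F x)))"
          proof (rule AE_I2)
            fix x
            have "cmod (W1 x - W2 x) \<le> cmod (W1 x) + cmod (W2 x)" by (rule norm_triangle_ineq4)
            then have "cmod (W1 x - W2 x) \<le> 2 * cmod (F x)" by (simp add: nW1 nW2)
            then have "\<bar>x\<bar>^k * cmod (W1 x - W2 x) \<le> \<bar>x\<bar>^k * (2 * cmod (F x))"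
              by (intro mult_left_mono) auto
            then show "norm (\<bar>x\<bar>^k * cmod (W1 x - W2 x)) \<le> norm (2 * (\<bar>x\<bar>^k * cmod (F x)))"
              by (simp add: abs_mult)
          qed
        qed
      qed
      have eq1: "(\<integral>\<xi>. cis (y * \<xi> - p1 \<xi>) * F \<xi> \<partial>lborel) = PhiW W1 y" for y
        unfolding PhiW_def W1_def by (intro Bochner_Integration.integral_cong refl) (simp add: cis_split mult.assoc)
      have eq2: "(\<integral>\<xi>. cis (y * \<xi> - p2 \<xi>) * F \<xi> \<partial>lborel) = PhiW W2 y" for y
        unfolding PhiW_def W2_def by (intro Bochner_Integration.integral_cong refl) (simp add: cis_split mult.assoc)
      have eqD: "PhiW W1 y - PhiW W2 y = PhiW (\<lambda>\<xi>. W1 \<xi> - W2 \<xi>) y" for y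
      proof -
        have "PhiW W1 y - PhiW W2 y = (\<integral>\<xi>. cis (y * \<xi>) * W1 \<xi> - cis (y * \<xi>) * W2 \<xi> \<partial>lborel)"
          unfolding PhiW_def
          by (rule Bochner_Integration.integral_diff[symmetric]) (rule moments_integrand[OF M1], rule moments_integrand[OF M2])
        also have "\<dots> = PhiW (\<lambda>\<xi>. W1 \<xi> - W2 \<xi>) y" unfolding PhiW_def by (simp add: algebra_simps)
        finally show ?thesis .
      qed
      have fun_eq: "(\<lambda>y. airy_sol \<epsilon> \<phi> y t - whitham_sol \<epsilon> \<phi> y t) = (\<lambda>y. Re (c * PhiW (\<lambda>\<xi>. W1 \<xi> - W2 \<xi>) y))"
      proof (rule ext)
        fix y
        show "airy_sol \<epsilon> \<phi> y t - whitham_sol \<epsilon> \<phi> y t = Re (c * PhiW (\<lambda>\<xi>. W1 \<xi> - W2 \<xi>) y)"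
          unfolding airy_eq wh_eq eq1 eq2 eqD[symmetric] by (simp add: algebra_simps)
      qed
      define V where "V = (\<lambda>\<xi>. (\<i> * complex_of_real \<xi>)^j * (W1 \<xi> - W2 \<xi>))"
      have val: "(deriv ^^ j) (\<lambda>y. airy_sol \<epsilon> \<phi> y t - whitham_sol \<epsilon> \<phi> y t) x = Re (c * PhiW V x)"
        unfolding fun_eq deriv_iter[OF MD] V_def ..
      have MV: "moments V" unfolding V_def by (rule moments_pow[OF MD])
      define E where "E = enn2real (sobolev_energy (real j + 7) \<phi>)"
      have E0: "0 \<le> E" by (simp add: E_def)
      have rE: "(sobolev_norm (real j + 7) \<phi>)^2 = E"
        unfolding sobolev_norm_def E_def[symmetric] using E0 by simp
      have Ieq: "E = enn2real (\<integral>\<^sup>+\<xi>. ennreal ((1 + \<xi>\<^sup>2) powr real ((j+5)+2) * (cmod (F \<xi>))\<^sup>2) \<partial>lborel)"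
        unfolding E_def sobolev_energy_def F_def by (simp add: add.commute)
      have Ib: "(\<integral>\<xi>. \<bar>\<xi>\<bar>^(j+5) * cmod (F \<xi>) \<partial>lborel) \<le> (E + pi) / 2"
        unfolding Ieq by (rule sob_moment(2)[OF Fm sob])
      have pt: "cmod (cis (x * \<xi>) * V \<xi>) \<le> 3 * t * \<epsilon>^2 * (\<bar>\<xi>\<bar>^(j+5) * cmod (F \<xi>))" for \<xi>
      proof -
        have "W1 \<xi> - W2 \<xi> = (cis (- p1 \<xi>) - cis (- p2 \<xi>)) * F \<xi>"
          unfolding W1_def W2_def by (simp add: algebra_simps)
        then have "cmod (W1 \<xi> - W2 \<xi>) = cmod (cis (- p1 \<xi>) - cis (- p2 \<xi>)) * cmod (F \<xi>)"
          by (simp add: norm_mult)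
        also have "\<dots> \<le> \<bar>- p1 \<xi> - - p2 \<xi>\<bar> * cmod (F \<xi>)" by (intro mult_right_mono cis_lip) auto
        also have "\<bar>- p1 \<xi> - - p2 \<xi>\<bar> = \<bar>t * (\<xi> - \<epsilon> / 6 * \<xi> ^ 3) - t * \<xi> * lsym (sqrt \<epsilon> * \<xi>)\<bar>"
          unfolding p1_def p2_def by (simp add: abs_minus_commute)
        also have "\<dots> \<le> 3 * t * \<epsilon>^2 * \<bar>\<xi>\<bar>^5" by (rule phase_bound[OF eps t])
        finally have d: "cmod (W1 \<xi> - W2 \<xi>) \<le> 3 * t * \<epsilon>^2 * \<bar>\<xi>\<bar>^5 * cmod (F \<xi>)"
          by (simp add: mult_right_mono)
        have "cmod (cis (x * \<xi>) * V \<xi>) = \<bar>\<xi>\<bar>^j * cmod (W1 \<xi> - W2 \<xi>)"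
          unfolding V_def by (simp add: norm_mult norm_power)
        also have "\<dots> \<le> \<bar>\<xi>\<bar>^j * (3 * t * \<epsilon>^2 * \<bar>\<xi>\<bar>^5 * cmod (F \<xi>))"
          by (intro mult_left_mono d) auto
        also have "\<dots> = 3 * t * \<epsilon>^2 * (\<bar>\<xi>\<bar>^(j+5) * cmod (F \<xi>))"
          by (simp add: power_add algebra_simps)
        finally show ?thesis .
      qed
      have "\<bar>Re (c * PhiW V x)\<bar> \<le> cmod (c * PhiW V x)" by (rule abs_Re_le_cmod)
      also have "\<dots> = (1/(2*pi)) * cmod (PhiW V x)" unfolding c_def
        by (simp only: norm_mult norm_of_real) (use pi_gt_zero in simp)
      also have "cmod (PhiW V x) \<le> (\<integral>\<xi>. cmod (cis (x * \<xi>) * V \<xi>) \<partial>lborel)"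
        unfolding PhiW_def by (rule integral_norm_bound)
      also have "\<dots> \<le> (\<integral>\<xi>. 3 * t * \<epsilon>^2 * (\<bar>\<xi>\<bar>^(j+5) * cmod (F \<xi>)) \<partial>lborel)"
        by (rule integral_mono) (use mF[of "j+5"] moments_integrand[OF MV] pt in auto)
      also have "\<dots> = 3 * t * \<epsilon>^2 * (\<integral>\<xi>. \<bar>\<xi>\<bar>^(j+5) * cmod (F \<xi>) \<partial>lborel)" by simp
      also have "\<dots> \<le> 3 * t * \<epsilon>^2 * ((E + pi) / 2)"
        by (rule mult_left_mono[OF Ib]) (use t in simp)
      finally have main: "\<bar>Re (c * PhiW V x)\<bar> \<le> 3 * t * \<epsilon>^2 * (E + pi) / (4 * pi)"
        by (simp add: field_simps)
      have "3 * t * \<epsilon>^2 * (E + pi) / (4 * pi) \<le> N (sobolev_norm (real j + 7) \<phi>) * \<epsilon>\<^sup>2 * (1 + t)"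
      proof -
        have K0: "0 \<le> 3 * (E + pi) / (4 * pi)" using E0 by (simp add: pi_gt_zero less_imp_le)
        have "3 * t * \<epsilon>^2 * (E + pi) / (4 * pi) = (3 * (E + pi) / (4 * pi)) * (\<epsilon>^2 * t)" by simp
        also have "\<dots> \<le> (3 * (E + pi) / (4 * pi) + 1) * (\<epsilon>^2 * (1 + t))"
          using K0 t by (intro mult_mono) auto
        also have "\<dots> = N (sobolev_norm (real j + 7) \<phi>) * \<epsilon>\<^sup>2 * (1 + t)"
          unfolding N_def rE by simp
        finally show ?thesis .
      qed
      with main show ?thesis unfolding val by linarith
    qed
  qed
qed

end
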